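(* Let $X$ be a separable Banach space over $\mathbb{K}\in\{\mathbb{R},\mathbb{C}\}$ and $T\colon X\to X$ a bounded linear operator. Then $\mathrm{Prox}_k(T)$ is dense in $X^k$ for every $k\geq 2$ if and only if there exist a sequence $\{p_n\}$ in $\mathbb{N}$ and a dense subset $K$ of $X$ such that $\lim_{n\to\infty}T^{p_n}x=0$ for every $x\in K$.
   Context: For $k\geq 2$, $\mathrm{Prox}_k(T)=\{(x_1,\dots,x_k)\in X^k: \liminf_{n\to\infty}\max_{1\leq i<j\leq k}\|T^nx_i-T^nx_j\|=0\}$. *)

theory Defs
  imports "HOL-Analysis.Analysis"
begin

text \<open>k-tuples of X are modelled as extensional functions on {..<k}.
  Prox_k(T): tuples whose pairwise orbit-distance max has liminf 0.\<close>

definition Prox :: "nat \<Rightarrow> ('a::real_normed_vector \<Rightarrow> 'a) \<Rightarrow> (nat \<Rightarrow> 'a) set" where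
  "Prox k T = {x \<in> PiE {..<k} (\<lambda>_. UNIV).
      liminf (\<lambda>n. ereal (Max {norm ((T ^^ n) (x i) - (T ^^ n) (x j)) | i j. i < j \<and> j < k})) = 0}"

definition dense_in_power :: "nat \<Rightarrow> (nat \<Rightarrow> 'a::metric_space) set \<Rightarrow> bool" where
  "dense_in_power k A \<longleftrightarrow>
     (\<forall>y \<in> PiE {..<k} (\<lambda>_. UNIV). \<forall>e>0. \<exists>x\<in>A. \<forall>i<k. dist (x i) (y i) < e)"

end

theory Submission
  imports Defs
begin

lemma bl_funpow:
  fixes T :: "'a::real_normed_vector \<Rightarrow> 'a"
  shows "bounded_linear T \<Longrightarrow> bounded_linear (T ^^ n)"
proof (induction n)
  case 0 have "T ^^ 0 = (\<lambda>x. x)" by auto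
  then show ?case using bounded_linear_ident by metis
next
  case (Suc n) then show ?case by (simp add: bounded_linear_compose)
qed

lemma liminf_zero_iff:
  fixes h :: "nat \<Rightarrow> real"
  assumes "\<And>n. h n \<ge> 0"
  shows "liminf (\<lambda>n. ereal (h n)) = 0 \<longleftrightarrow> (\<forall>c>0. \<forall>N. \<exists>n\<ge>N. h n < c)"
proof
  assume L: "liminf (\<lambda>n. ereal (h n)) = 0"
  show "\<forall>c>0. \<forall>N. \<exists>n\<ge>N. h n < c"
  proof (intro allI impI, rule ccontr)
    fix c :: real and N assume c: "c > 0" and "\<not> (\<exists>n\<ge>N. h n < c)"
    then have "\<forall>n\<ge>N. ereal c \<le> ereal (h n)" by auto
    then have "eventually (\<lambda>n. ereal c \<le> ereal (h n)) sequentially"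
      using eventually_sequentially by blast
    then have "ereal c \<le> liminf (\<lambda>n. ereal (h n))" by (rule Liminf_bounded)
    then show False using L c by simp
  qed
next
  assume F: "\<forall>c>0. \<forall>N. \<exists>n\<ge>N. h n < c"
  have ge: "0 \<le> liminf (\<lambda>n. ereal (h n))"
    by (rule Liminf_bounded) (use assms in auto)
  have "\<not> 0 < liminf (\<lambda>n. ereal (h n))"
  proof
    assume "0 < liminf (\<lambda>n. ereal (h n))"
    then obtain z where z: "0 < ereal z" "ereal z < liminf (\<lambda>n. ereal (h n))"
      using ereal_dense2 by blast
    then have "eventually (\<lambda>n. ereal z < ereal (h n)) sequentially" using less_LiminfD[OF z(2)] by simp
    then obtain N where "\<forall>n\<ge>N. z < h n" by (auto simp: eventually_sequentially)
    moreover obtain n where "n \<ge> N" "h n < z" using F z(1) by auto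
    ultimately show False by force
  qed
  then show "liminf (\<lambda>n. ereal (h n)) = 0" using ge by simp
qed

lemma fin_pairs: "finite {f i j | i j. i < j \<and> j < (k::nat)}"
proof -
  have "{f i j | i j. i < j \<and> j < k} \<subseteq> (\<lambda>(i,j). f i j) ` ({..<k} \<times> {..<k})" by force
  then show ?thesis by (rule finite_subset) auto
qed


lemma step:
  fixes T :: "'a::real_normed_vector \<Rightarrow> 'a"
  assumes bl: "bounded_linear T" and D: "dense_in_power (m+2) (Prox (m+2) T)" and e: "\<epsilon> > 0"
  shows "\<exists>v n. n \<ge> N \<and> (\<forall>i\<le>m. norm (v i - u i) < \<epsilon> \<and> norm ((T^^n) (v i)) < \<epsilon>)"
proof -
  define y where "y = restrict (\<lambda>i. if i = 0 then 0 else u (i - 1)) {..<m+2}"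
  have "y \<in> PiE {..<m+2} (\<lambda>_. UNIV)" unfolding y_def by simp
  with D e obtain x where x: "x \<in> Prox (m+2) T" and xd: "\<forall>i<m+2. dist (x i) (y i) < \<epsilon>/2"
    unfolding dense_in_power_def by (meson half_gt_zero)
  define h where "h n = Max {norm ((T ^^ n) (x i) - (T ^^ n) (x j)) | i j. i < j \<and> j < m+2}" for n
  have hge: "norm ((T ^^ n) (x i) - (T ^^ n) (x j)) \<le> h n" if "i < j" "j < m+2" for n i j
    unfolding h_def by (rule Max_ge[OF fin_pairs]) (use that in blast)
  have h0: "h n \<ge> 0" for n using hge[of 0 1 n] norm_ge_zero[of "(T ^^ n) (x 0) - (T ^^ n) (x 1)"] by linarith
  have "liminf (\<lambda>n. ereal (h n)) = 0" using x unfolding Prox_def h_def by simp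
  then obtain n where n: "n \<ge> N" "h n < \<epsilon>" using liminf_zero_iff[of h] h0 e by blast
  define v where "v i = x (Suc i) - x 0" for i
  have blp: "bounded_linear (T ^^ n)" by (rule bl_funpow[OF bl])
  show ?thesis
  proof (intro exI conjI allI impI)
    show "n \<ge> N" by fact
  next
    fix i assume i: "i \<le> m"
    have a: "dist (x (Suc i)) (u i) < \<epsilon>/2" using xd[rule_format, of "Suc i"] i by (simp add: y_def)
    have b: "norm (x 0) < \<epsilon>/2" using xd[rule_format, of 0] by (simp add: y_def)
    have "norm (v i - u i) \<le> norm (x (Suc i) - u i) + norm (x 0)"
      unfolding v_def using norm_triangle_ineq4[of "x (Suc i) - u i" "x 0"] by (simp add: algebra_simps)
    then show "norm (v i - u i) < \<epsilon>" using a b by (simp add: dist_norm)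
  next
    fix i assume i: "i \<le> m"
    have "norm ((T^^n) (v i)) = norm ((T ^^ n) (x 0) - (T ^^ n) (x (Suc i)))"
      unfolding v_def linear_diff[OF bounded_linear.linear[OF blp]] by (rule norm_minus_commute)
    also have "\<dots> \<le> h n" by (rule hge) (use i in auto)
    finally show "norm ((T^^n) (v i)) < \<epsilon>" using n by simp
  qed
qed


lemma geom_tail:
  fixes z :: "nat \<Rightarrow> 'a::real_normed_vector"
  assumes H: "\<forall>m\<ge>l. norm (z (Suc m) - z m) \<le> (1/2)^(Suc m)" and M: "M \<ge> l"
  shows "norm (z M - z l) \<le> (1/2)^l - (1/2)^M"
  using M
proof (induction M rule: dec_induct)
  case base then show ?case by simp
next
  case (step M)
  have "norm (z (Suc M) - z l) \<le> norm (z (Suc M) - z M) + norm (z M - z l)"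
    by (metis diff_add_cancel norm_triangle_ineq add_diff_eq)
  also have "\<dots> \<le> (1/2)^(Suc M) + ((1/2)^l - (1/2)^M)" using H step by (intro add_mono) auto
  also have "\<dots> = (1/2)^l - (1/2::real)^(Suc M)" by simp
  finally show ?case .
qed

lemma geom_convergent:
  fixes z :: "nat \<Rightarrow> 'a::banach"
  assumes H: "\<forall>m\<ge>l. norm (z (Suc m) - z m) \<le> (1/2)^(Suc m)"
  shows "convergent z"
proof (rule Cauchy_convergent, unfold Cauchy_def, intro allI impI)
  fix e :: real assume e: "e > 0"
  obtain n where n: "(1/2::real)^n < e/2" using real_arch_pow_inv[of "e/2" "1/2"] e by auto
  define M where "M = max n l"
  have hM: "(1/2::real)^M \<le> (1/2)^n" unfolding M_def by (rule power_decreasing) auto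
  show "\<exists>M. \<forall>m\<ge>M. \<forall>n\<ge>M. dist (z m) (z n) < e"
  proof (intro exI allI impI)
    fix a b assume a: "a \<ge> M" and b: "b \<ge> M"
    have la: "norm (z a - z M) \<le> (1/2)^M" using geom_tail[OF _ a] H M_def
      by (smt (verit) max.cobounded2 order_trans zero_le_power zero_le_divide_1_iff zero_le_numeral)
    have lb: "norm (z b - z M) \<le> (1/2)^M" using geom_tail[OF _ b] H M_def
      by (smt (verit) max.cobounded2 order_trans zero_le_power zero_le_divide_1_iff zero_le_numeral)
    have "dist (z a) (z b) \<le> norm (z a - z M) + norm (z b - z M)"
      by (metis dist_norm dist_triangle2)
    then show "dist (z a) (z b) < e" using la lb hM n by linarith
  qed
qed

lemma geom_limit:
  fixes z :: "nat \<Rightarrow> 'a::real_normed_vector"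
  assumes H: "\<forall>m\<ge>l. norm (z (Suc m) - z m) \<le> (1/2)^(Suc m)" and L: "z \<longlonglongrightarrow> w"
  shows "norm (w - z l) \<le> (1/2)^l"
proof -
  have "(\<lambda>M. norm (z M - z l)) \<longlonglongrightarrow> norm (w - z l)"
    by (intro tendsto_intros L)
  moreover have "\<forall>M\<ge>l. norm (z M - z l) \<le> (1/2)^l"
    using geom_tail[OF H] by (smt (verit) zero_le_power zero_le_divide_1_iff zero_le_numeral)
  ultimately show ?thesis by (intro LIMSEQ_le_const2) auto
qed


lemma forward:
  fixes T :: "'a::banach \<Rightarrow> 'a"
  assumes sep: "separable_space (euclidean :: 'a topology)"
    and bl: "bounded_linear T"
    and D: "\<forall>k\<ge>2. dense_in_power k (Prox k T)"
  shows "\<exists>p :: nat \<Rightarrow> nat. \<exists>K :: 'a set. closure K = UNIV \<and>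
            (\<forall>x\<in>K. (\<lambda>n. (T ^^ p n) x) \<longlonglongrightarrow> 0)"
proof -
  obtain C :: "'a set" where C: "countable C" "closure C = UNIV"
    using sep unfolding separable_space_def euclidean_closure_of by auto
  have Cne: "C \<noteq> {}" using C(2) by auto
  define d0 where "d0 = from_nat_into C"
  have rd0: "range d0 = C" unfolding d0_def by (rule range_from_nat_into[OF Cne C(1)])
  define d where "d i = d0 (fst (prod_decode i))" for i
  have "\<forall>j. \<exists>K>0. \<forall>x. norm ((T^^j) x) \<le> norm x * K"
    using bounded_linear.pos_bounded[OF bl_funpow[OF bl]] by blast
  then obtain Kf where Kf: "\<And>j. Kf j > 0" "\<And>j x. norm ((T^^j) x) \<le> norm x * Kf j"
    by metis
  define Q where "Q (m::nat) (u::nat\<Rightarrow>'a) (\<epsilon>::real) (N::nat) (v::nat\<Rightarrow>'a) (n::nat) \<longleftrightarrow> n \<ge> N \<and> (\<forall>i\<le>m. norm (v i - u i) < \<epsilon> \<and> norm ((T^^n) (v i)) < \<epsilon>)"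
    for m u \<epsilon> N v n
  define G where "G m u \<epsilon> N = (SOME vn. Q m u \<epsilon> N (fst vn) (snd vn))" for m u \<epsilon> N
  have hG: "Q m u \<epsilon> N (fst (G m u \<epsilon> N)) (snd (G m u \<epsilon> N))" if "\<epsilon> > 0" for m u \<epsilon> N
  proof -
    have "dense_in_power (m+2) (Prox (m+2) T)" using D by simp
    then have "\<exists>v n. Q m u \<epsilon> N v n" unfolding Q_def using step[OF bl _ that] by blast
    then have "\<exists>vn. Q m u \<epsilon> N (fst vn) (snd vn)" by auto
    then show ?thesis unfolding G_def by (rule someI_ex)
  qed
  define eps where "eps m n = (1/2::real)^m / (1 + (\<Sum>j\<le>n. Kf j))" for m n
  have sKf: "(\<Sum>j\<le>n. Kf j) \<ge> 0" for n using Kf(1) by (simp add: sum_nonneg less_imp_le)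
  have eps_pos: "eps m n > 0" for m n unfolding eps_def using sKf[of n] by simp
  have eps_le: "eps m n \<le> (1/2)^m" for m n
  proof -
    have "(1/2::real)^m / (1 + (\<Sum>j\<le>n. Kf j)) \<le> (1/2)^m / 1"
      by (rule divide_left_mono) (use sKf[of n] in auto)
    then show ?thesis by (simp add: eps_def)
  qed
  define S where "S = rec_nat (G 0 (\<lambda>_. d 0) 1 0)
     (\<lambda>m st. G (Suc m) ((fst st)(Suc m := d (Suc m))) (eps (Suc m) (snd st)) (Suc (snd st)))"
  have S0: "S 0 = G 0 (\<lambda>_. d 0) 1 0" by (simp add: S_def)
  have SS: "S (Suc m) = G (Suc m) ((fst (S m))(Suc m := d (Suc m))) (eps (Suc m) (snd (S m))) (Suc (snd (S m)))" for m
    by (simp add: S_def)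
  define V where "V m = fst (S m)" for m
  define P where "P m = snd (S m)" for m
  have Q0: "Q 0 (\<lambda>_. d 0) 1 0 (V 0) (P 0)" unfolding V_def P_def S0 by (rule hG) simp
  have QS: "Q (Suc m) ((V m)(Suc m := d (Suc m))) (eps (Suc m) (P m)) (Suc (P m)) (V (Suc m)) (P (Suc m))" for m
    unfolding V_def P_def SS by (rule hG) (rule eps_pos)
  have Pmono: "P m \<le> P m'" if "m \<le> m'" for m m'
  proof -
    have "P n \<le> P (Suc n)" for n using QS[of n] unfolding Q_def by simp
    then show ?thesis using that by (rule lift_Suc_mono_le)
  qed
  have F2: "norm ((T^^P m) (V m i)) < (1/2)^m" if "i \<le> m" for m i
  proof (cases m)
    case 0 then show ?thesis using Q0 that unfolding Q_def by simp
  next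
    case (Suc m') then show ?thesis using QS[of m'] that eps_le[of "Suc m'" "P m'"] unfolding Q_def by force
  qed
  have F4: "norm (V i i - d i) < (1/2)^i" for i
  proof (cases i)
    case 0 then show ?thesis using Q0 unfolding Q_def by simp
  next
    case (Suc m') then show ?thesis using QS[of m'] eps_le[of "Suc m'" "P m'"] unfolding Q_def by force
  qed
  have F3: "norm ((T^^j) (V (Suc m) i - V m i)) \<le> (1/2)^(Suc m)" if "i \<le> m" "j \<le> P m" for m i j
  proof -
    have lt: "norm (V (Suc m) i - V m i) < eps (Suc m) (P m)"
    proof -
      have "norm (V (Suc m) i - ((V m)(Suc m := d (Suc m))) i) < eps (Suc m) (P m)"
        using QS[of m] that(1) unfolding Q_def by (meson le_SucI)
      then show ?thesis using that by simp
    qed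
    have "Kf j \<le> (\<Sum>j\<le>P m. Kf j)" by (rule member_le_sum) (use Kf(1) that in \<open>auto simp: less_imp_le\<close>)
    then have Kle: "Kf j \<le> 1 + (\<Sum>j\<le>P m. Kf j)" by simp
    have "norm ((T^^j) (V (Suc m) i - V m i)) \<le> norm (V (Suc m) i - V m i) * Kf j" by (rule Kf(2))
    also have "\<dots> \<le> eps (Suc m) (P m) * (1 + (\<Sum>j\<le>P m. Kf j))"
      using lt Kle Kf(1)[of j] eps_pos[of "Suc m" "P m"] by (intro mult_mono) auto
    also have "\<dots> = (1/2)^(Suc m)" unfolding eps_def using sKf[of "P m"]
      by (metis add_pos_nonneg less_numeral_extra(1) nonzero_divide_eq_eq order_less_irrefl)
    finally show ?thesis .
  qed
  have F3': "norm (V (Suc m) i - V m i) \<le> (1/2)^(Suc m)" if "i \<le> m" for m i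
    using F3[OF that, of 0] by simp
  have convV: "convergent (\<lambda>m. V m i)" for i
    by (rule geom_convergent[of i]) (use F3' in auto)
  define w where "w i = lim (\<lambda>m. V m i)" for i
  have limV: "(\<lambda>m. V m i) \<longlonglongrightarrow> w i" for i
    unfolding w_def using convV convergent_LIMSEQ_iff by blast
  have wd: "norm (w i - d i) < 2 * (1/2)^i" for i
  proof -
    have "norm (w i - V i i) \<le> (1/2)^i" by (rule geom_limit[of i]) (use F3' limV in auto)
    moreover have "norm (w i - d i) \<le> norm (w i - V i i) + norm (V i i - d i)"
      by (metis diff_add_cancel norm_triangle_ineq add_diff_eq)
    ultimately show ?thesis using F4[of i] by linarith
  qed
  have wT: "norm ((T^^P l) (w i)) \<le> 2 * (1/2)^l" if "i \<le> l" for i l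
  proof -
    have blP: "bounded_linear (T^^P l)" by (rule bl_funpow[OF bl])
    have lin: "(T^^P l) a - (T^^P l) b = (T^^P l) (a - b)" for a b
      using linear_diff[OF bounded_linear.linear[OF blP]] by simp
    have H: "\<forall>m\<ge>l. norm ((T^^P l) (V (Suc m) i) - (T^^P l) (V m i)) \<le> (1/2)^(Suc m)"
      using F3 Pmono that unfolding lin by auto
    have "(\<lambda>m. (T^^P l) (V m i)) \<longlonglongrightarrow> (T^^P l) (w i)"
      by (rule bounded_linear.tendsto[OF blP limV])
    then have "norm ((T^^P l) (w i) - (T^^P l) (V l i)) \<le> (1/2)^l"
      by (rule geom_limit[OF H])
    moreover have "norm ((T^^P l) (w i)) \<le> norm ((T^^P l) (w i) - (T^^P l) (V l i)) + norm ((T^^P l) (V l i))"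
      by (metis diff_add_cancel norm_triangle_ineq)
    ultimately show ?thesis using F2[OF that] by linarith
  qed
  show ?thesis
  proof (intro exI conjI ballI)
    show "closure (range w) = UNIV"
    proof (rule set_eqI, simp add: closure_approachable, intro allI impI)
      fix y :: 'a and e :: real assume e: "e > 0"
      have "y \<in> closure C" using C(2) by simp
      then obtain c where c: "c \<in> C" "dist c y < e/2" using e closure_approachable
        by (metis half_gt_zero)
      obtain a where a: "c = d0 a" using c(1) rd0 by auto
      obtain n0 where n0: "(1/2::real)^n0 < e/4" using real_arch_pow_inv[of "e/4" "1/2"] e by auto
      define i where "i = prod_encode (a, n0)"
      have di: "d i = c" unfolding d_def i_def a by simp
      have "n0 \<le> i" unfolding i_def by (rule le_prod_encode_2)
      then have pw: "(1/2::real)^i \<le> (1/2)^n0" by (intro power_decreasing) auto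
      have "dist (w i) c = norm (w i - d i)" using di by (simp add: dist_norm)
      then have "dist (w i) c < e/2" using wd[of i] n0 pw by linarith
      then have "dist (w i) y < e" using c(2) dist_triangle[of "w i" y c] by linarith
      then show "\<exists>x. dist (w x) y < e" by blast
    qed
  next
    fix x assume "x \<in> range w"
    then obtain i where x: "x = w i" by auto
    have "(\<lambda>l. 2 * (1/2::real)^l) \<longlonglongrightarrow> 2 * 0"
      by (intro tendsto_mult tendsto_const LIMSEQ_realpow_zero) auto
    then have lim0: "(\<lambda>l. 2 * (1/2::real)^l) \<longlonglongrightarrow> 0" by simp
    have ev: "eventually (\<lambda>l. norm ((T^^P l) x) \<le> 2 * (1/2)^l) sequentially"
      unfolding x eventually_sequentially by (intro exI[of _ i] allI impI wT)
    show "(\<lambda>n. (T ^^ P n) x) \<longlonglongrightarrow> 0"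
      by (rule Lim_null_comparison[OF ev lim0])
  qed
qed


lemma backward_inf:
  fixes T :: "'a::real_normed_vector \<Rightarrow> 'a"
  assumes bl: "bounded_linear T" and pinf: "filterlim p at_top sequentially"
    and K: "closure K = UNIV" and conv: "\<forall>x\<in>K. (\<lambda>n. (T ^^ p n) x) \<longlonglongrightarrow> 0"
  shows "\<forall>k\<ge>2. dense_in_power k (Prox k T)"
proof (intro allI impI, unfold dense_in_power_def, intro ballI allI impI)
  fix k :: nat and y :: "nat \<Rightarrow> 'a" and e :: real
  assume k: "k \<ge> 2" and e: "e > 0"
  have "\<forall>i. \<exists>z\<in>K. dist z (y i) < e" using K e closure_approachable by blast
  then obtain g where g: "\<And>i. g i \<in> K" "\<And>i. dist (g i) (y i) < e" by metis
  define x where "x = restrict g {..<k}"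
  define h where "h n = Max {norm ((T ^^ n) (x i) - (T ^^ n) (x j)) | i j. i < j \<and> j < k}" for n
  have hge: "norm ((T ^^ n) (x i) - (T ^^ n) (x j)) \<le> h n" if "i < j" "j < k" for n i j
    unfolding h_def by (rule Max_ge[OF fin_pairs]) (use that in blast)
  have h0: "h n \<ge> 0" for n using hge[of 0 1 n] k norm_ge_zero[of "(T ^^ n) (x 0) - (T ^^ n) (x 1)"] by linarith
  define B where "B n = 2 * (\<Sum>i<k. norm ((T^^n) (x i)))" for n
  have hB: "h n \<le> B n" for n
    unfolding h_def
  proof (rule Max.boundedI[OF fin_pairs])
    show "{norm ((T ^^ n) (x i) - (T ^^ n) (x j)) |i j. i < j \<and> j < k} \<noteq> {}" using k by force
  next
    fix a assume "a \<in> {norm ((T ^^ n) (x i) - (T ^^ n) (x j)) |i j. i < j \<and> j < k}"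
    then obtain i j where ij: "i < j" "j < k" "a = norm ((T ^^ n) (x i) - (T ^^ n) (x j))" by blast
    have si: "norm ((T^^n) (x i)) \<le> (\<Sum>i<k. norm ((T^^n) (x i)))"
      by (rule member_le_sum[where f = "\<lambda>i. norm ((T^^n) (x i))"]) (use ij in auto)
    have sj: "norm ((T^^n) (x j)) \<le> (\<Sum>i<k. norm ((T^^n) (x i)))"
      by (rule member_le_sum[where f = "\<lambda>i. norm ((T^^n) (x i))"]) (use ij in auto)
    have "a \<le> norm ((T^^n) (x i)) + norm ((T^^n) (x j))" unfolding ij(3) by (rule norm_triangle_ineq4)
    then show "a \<le> B n" using si sj unfolding B_def by linarith
  qed
  have Bt: "(\<lambda>n. B (p n)) \<longlonglongrightarrow> 0"
  proof -
    have "(\<lambda>n. (T^^p n) (x i)) \<longlonglongrightarrow> 0" if "i \<in> {..<k}" for i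
      using conv g(1)[of i] that unfolding x_def by simp
    then have "(\<lambda>n. \<Sum>i<k. norm ((T^^p n) (x i))) \<longlonglongrightarrow> (\<Sum>i<k. 0)"
      by (intro tendsto_sum tendsto_norm_zero)
    then show ?thesis unfolding B_def using tendsto_mult_right_zero by fastforce
  qed
  have "liminf (\<lambda>n. ereal (h n)) = 0"
  proof (subst liminf_zero_iff[OF h0], intro allI impI)
    fix c :: real and N assume c: "c > 0"
    have "eventually (\<lambda>n. B (p n) < c) sequentially"
    proof -
      from Bt c obtain no where no: "\<forall>n\<ge>no. dist (B (p n)) 0 < c" unfolding lim_sequentially by blast
      show ?thesis unfolding eventually_sequentially
        by (intro exI[of _ no]) (use no in \<open>auto simp: dist_real_def\<close>)
    qed
    moreover have "eventually (\<lambda>n. N \<le> p n) sequentially" using pinf filterlim_at_top by blast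
    ultimately have "eventually (\<lambda>n. B (p n) < c \<and> N \<le> p n) sequentially" by (rule eventually_conj)
    then obtain n where "B (p n) < c" "N \<le> p n" by (auto simp: eventually_sequentially)
    then show "\<exists>n\<ge>N. h n < c" using hB[of "p n"] by force
  qed
  then have "x \<in> Prox k T" unfolding Prox_def h_def x_def by simp
  moreover have "\<forall>i<k. dist (x i) (y i) < e" using g(2) unfolding x_def by simp
  ultimately show "\<exists>x\<in>Prox k T. \<forall>i<k. dist (x i) (y i) < e" by blast
qed


lemma reduce:
  fixes T :: "'a::real_normed_vector \<Rightarrow> 'a"
  assumes bl: "bounded_linear T"
    and K: "closure K = UNIV" and conv: "\<forall>x\<in>K. (\<lambda>n. (T ^^ p n) x) \<longlonglongrightarrow> 0"
  shows "\<exists>p' K'. filterlim p' at_top sequentially \<and> closure K' = UNIV \<and>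
            (\<forall>x\<in>K'. (\<lambda>n. (T ^^ p' n) x) \<longlonglongrightarrow> 0)"
proof (cases "filterlim p at_top sequentially")
  case True then show ?thesis using K conv by blast
next
  case False
  then obtain Z where Z: "\<not> eventually (\<lambda>n. Z \<le> p n) sequentially"
    unfolding filterlim_at_top by blast
  have "\<exists>m. frequently (\<lambda>n. p n = m) sequentially"
  proof (rule ccontr)
    assume "\<not> ?thesis"
    then have "\<forall>m\<in>{..<Z}. eventually (\<lambda>n. p n \<noteq> m) sequentially"
      by (simp add: not_frequently)
    then have "eventually (\<lambda>n. \<forall>m\<in>{..<Z}. p n \<noteq> m) sequentially"
      by (rule eventually_ball_finite[rotated]) simp
    then have "eventually (\<lambda>n. Z \<le> p n) sequentially"
      by (rule eventually_mono) (auto simp: not_less[symmetric])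
    then show False using Z by simp
  qed
  then obtain m where m: "frequently (\<lambda>n. p n = m) sequentially" by blast
  have blm: "bounded_linear (T^^m)" by (rule bl_funpow[OF bl])
  have zK: "(T^^m) x = 0" if "x \<in> K" for x
  proof (rule ccontr)
    assume nz: "(T^^m) x \<noteq> 0"
    have "eventually (\<lambda>n. dist ((T ^^ p n) x) 0 < norm ((T^^m) x)) sequentially"
      using conv that nz by (auto simp: tendsto_iff)
    then have "eventually (\<lambda>n. p n \<noteq> m) sequentially"
      by (rule eventually_mono) auto
    then show False using m by (simp add: frequently_def)
  qed
  have cl: "closed {x. (T^^m) x = (\<lambda>_. 0) x}"
    by (intro closed_Collect_eq linear_continuous_on blm continuous_on_const)
  have "K \<subseteq> {x. (T^^m) x = (\<lambda>_. 0) x}" using zK by auto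
  then have "closure K \<subseteq> {x. (T^^m) x = (\<lambda>_. 0) x}" using cl by (rule closure_minimal)
  then have z: "(T^^m) x = 0" for x using K by auto
  have "(T ^^ (n + m)) x = 0" for n x
  proof -
    have "(T ^^ (n + m)) x = (T^^n) ((T^^m) x)" by (simp add: funpow_add)
    also have "\<dots> = 0" unfolding z by (rule linear_0[OF bounded_linear.linear[OF bl_funpow[OF bl]]])
    finally show ?thesis .
  qed
  moreover have "filterlim (\<lambda>n. n + m) at_top sequentially"
    unfolding filterlim_at_top eventually_sequentially by (metis le_add1 order_trans)
  ultimately show ?thesis by (intro exI[of _ "\<lambda>n. n + m"] exI[of _ UNIV]) auto
qed

theorem lemma3p3:
  fixes T :: "'a::banach \<Rightarrow> 'a"
  assumes "separable_space (euclidean :: 'a topology)"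
    and "bounded_linear T"
  shows "(\<forall>k\<ge>2. dense_in_power k (Prox k T)) \<longleftrightarrow>
         (\<exists>p :: nat \<Rightarrow> nat. \<exists>K :: 'a set. closure K = UNIV \<and>
            (\<forall>x\<in>K. (\<lambda>n. (T ^^ p n) x) \<longlonglongrightarrow> 0))"
proof
  assume "\<forall>k\<ge>2. dense_in_power k (Prox k T)"
  then show "\<exists>p :: nat \<Rightarrow> nat. \<exists>K :: 'a set. closure K = UNIV \<and>
            (\<forall>x\<in>K. (\<lambda>n. (T ^^ p n) x) \<longlonglongrightarrow> 0)"
    by (rule forward[OF assms])
next
  assume "\<exists>p :: nat \<Rightarrow> nat. \<exists>K :: 'a set. closure K = UNIV \<and>
            (\<forall>x\<in>K. (\<lambda>n. (T ^^ p n) x) \<longlonglongrightarrow> 0)"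
  then obtain p K where "closure K = UNIV" "\<forall>x\<in>K. (\<lambda>n. (T ^^ p n) x) \<longlonglongrightarrow> 0" by blast
  then obtain p' K' where "filterlim p' at_top sequentially" "closure K' = UNIV"
    "\<forall>x\<in>K'. (\<lambda>n. (T ^^ p' n) x) \<longlonglongrightarrow> 0"
    using reduce[OF assms(2)] by blast
  then show "\<forall>k\<ge>2. dense_in_power k (Prox k T)" by (intro backward_inf[OF assms(2)])
qed

end
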